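(* There exists an infinite class of feasible configurations with span $\sigma=1$ such that, for each configuration $G$ of this class, every dedicated leader election algorithm for $G$ takes time $\Omega(n)$, where $n$ is the size (number of nodes) of $G$.
   Context: Model. A configuration is a finite simple undirected connected graph $G$ in which each node $v$ is tagged with a non-negative integer $t_v$ (wakeup tag); smallest tag $0$, span $\sigma$ = largest tag; its size is its number of nodes $n$. Nodes are anonymous and communicate in synchronous global rounds. A node $v$ wakes up in the first global round $r\le t_v$ in which it receives a message, if any, and otherwise in global round $t_v$; its local clock is $0$ in its wakeup round, it acts from local round $1$, and nodes do not know the global clock. In each round a node transmits a message to all neighbours, listens, or terminates. A listening node receives $M$ if exactly one neighbour transmits ($M$), hears collision noise (distinct from silence and messages) if at least two neighbours transmit, and silence otherwise; a transmitting node hears nothing. A DRIP is a common function mapping a node's history (what it heard in each local round $0,\ldots,i-1$, including whether/by which message it was woken) to its action in local round $i\ge1$, with every node eventually terminating permanently; a decision function maps each node's final history to $\{0,1\}$; a dedicated leader election algorithm for $G$ is a DRIP plus decision function such that exactly one node of $G$ outputs $1$; $G$ is feasible if one exists. The time of such an algorithm is the number of rounds until the nodes terminate. *)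

theory Defs
  imports Complex_Main
begin

datatype heard =
    Spont            \<comment> \<open>local round 0: woken spontaneously (by its tag)\<close>
  | WokeBy nat       \<comment> \<open>local round 0: woken by this message\<close>
  | HSilence | HNoise | HMsg nat
  | HTransmitted     \<comment> \<open>node transmitted in this round (hears nothing)\<close>

datatype action = Transmit nat | Listen | Terminate

datatype nstate = Asleep | Active "heard list" | Done "heard list"

type_synonym drip = "heard list \<Rightarrow> action"

definition transmitting :: "drip \<Rightarrow> nstate \<Rightarrow> nat option" where
  "transmitting A s = (case s of
      Active h \<Rightarrow> (case A h of Transmit m \<Rightarrow> Some m | _ \<Rightarrow> None)
    | _ \<Rightarrow> None)"

definition hear :: "nat \<Rightarrow> (nat \<Rightarrow> nat \<Rightarrow> bool) \<Rightarrow> drip \<Rightarrow> (nat \<Rightarrow> nstate) \<Rightarrow> nat \<Rightarrow> heard" where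
  "hear n E A S v = (let T = {u. u < n \<and> E v u \<and> transmitting A (S u) \<noteq> None} in
     if card T = 0 then HSilence
     else if card T = 1 then HMsg (the (transmitting A (S (the_elem T))))
     else HNoise)"

definition step :: "nat \<Rightarrow> (nat \<Rightarrow> nat \<Rightarrow> bool) \<Rightarrow> (nat \<Rightarrow> nat) \<Rightarrow> drip \<Rightarrow> nat
    \<Rightarrow> (nat \<Rightarrow> nstate) \<Rightarrow> (nat \<Rightarrow> nstate)" where
  "step n E t A r S = (\<lambda>v. case S v of
      Asleep \<Rightarrow> (case hear n E A S v of
                   HMsg m \<Rightarrow> (if r \<le> t v then Active [WokeBy m] else Asleep)
                 | _ \<Rightarrow> (if r = t v then Active [Spont] else Asleep))
    | Active h \<Rightarrow> (case A h of
                   Terminate \<Rightarrow> Done h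
                 | Transmit m \<Rightarrow> Active (h @ [HTransmitted])
                 | Listen \<Rightarrow> Active (h @ [hear n E A S v]))
    | Done h \<Rightarrow> Done h)"

text \<open>State of all nodes before global round r (i.e. after rounds 0..r-1).\<close>
primrec pre :: "nat \<Rightarrow> (nat \<Rightarrow> nat \<Rightarrow> bool) \<Rightarrow> (nat \<Rightarrow> nat) \<Rightarrow> drip \<Rightarrow> nat \<Rightarrow> (nat \<Rightarrow> nstate)" where
  "pre n E t A 0 = (\<lambda>_. Asleep)"
| "pre n E t A (Suc r) = step n E t A r (pre n E t A r)"

definition all_done :: "nat \<Rightarrow> (nat \<Rightarrow> nat \<Rightarrow> bool) \<Rightarrow> (nat \<Rightarrow> nat) \<Rightarrow> drip \<Rightarrow> nat \<Rightarrow> bool" where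
  "all_done n E t A r = (\<forall>v<n. \<exists>h. pre n E t A r v = Done h)"

definition terminates :: "nat \<Rightarrow> (nat \<Rightarrow> nat \<Rightarrow> bool) \<Rightarrow> (nat \<Rightarrow> nat) \<Rightarrow> drip \<Rightarrow> bool" where
  "terminates n E t A = (\<exists>r. all_done n E t A r)"

definition election_time :: "nat \<Rightarrow> (nat \<Rightarrow> nat \<Rightarrow> bool) \<Rightarrow> (nat \<Rightarrow> nat) \<Rightarrow> drip \<Rightarrow> nat" where
  "election_time n E t A = (LEAST r. all_done n E t A r)"

definition final_hist :: "nat \<Rightarrow> (nat \<Rightarrow> nat \<Rightarrow> bool) \<Rightarrow> (nat \<Rightarrow> nat) \<Rightarrow> drip \<Rightarrow> nat \<Rightarrow> heard list" where
  "final_hist n E t A v = (case pre n E t A (election_time n E t A) v of Done h \<Rightarrow> h | _ \<Rightarrow> [])"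

definition is_LE :: "nat \<Rightarrow> (nat \<Rightarrow> nat \<Rightarrow> bool) \<Rightarrow> (nat \<Rightarrow> nat) \<Rightarrow> drip \<Rightarrow> (heard list \<Rightarrow> bool) \<Rightarrow> bool" where
  "is_LE n E t A d = (terminates n E t A \<and>
      card {v. v < n \<and> d (final_hist n E t A v)} = 1)"

definition feasible :: "nat \<Rightarrow> (nat \<Rightarrow> nat \<Rightarrow> bool) \<Rightarrow> (nat \<Rightarrow> nat) \<Rightarrow> bool" where
  "feasible n E t = (\<exists>A d. is_LE n E t A d)"

definition valid_config :: "nat \<Rightarrow> (nat \<Rightarrow> nat \<Rightarrow> bool) \<Rightarrow> (nat \<Rightarrow> nat) \<Rightarrow> bool" where
  "valid_config n E t = (n \<ge> 1
     \<and> (\<forall>u v. E u v \<longrightarrow> u < n \<and> v < n)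
     \<and> (\<forall>u v. E u v \<longrightarrow> E v u)
     \<and> (\<forall>v. \<not> E v v)
     \<and> (\<forall>u<n. \<forall>v<n. E\<^sup>*\<^sup>* u v)
     \<and> (\<forall>v. n \<le> v \<longrightarrow> t v = 0)
     \<and> (\<exists>v<n. t v = 0))"

definition span :: "nat \<Rightarrow> (nat \<Rightarrow> nat) \<Rightarrow> nat" where
  "span n t = Max (t ` {..<n})"

end

theory Submission
  imports Defs
begin


definition pE :: "nat \<Rightarrow> nat \<Rightarrow> nat \<Rightarrow> bool" where
  "pE n u v = (u < n \<and> v < n \<and> (u = Suc v \<or> v = Suc u))"

definition pt :: "nat \<Rightarrow> nat \<Rightarrow> nat" where
  "pt k v = (if v = 0 \<or> v = 2*k then 1 else 0)"

fun hear2 :: "nat option \<Rightarrow> nat option \<Rightarrow> heard" where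
  "hear2 None None = HSilence"
| "hear2 (Some m) None = HMsg m"
| "hear2 None (Some m) = HMsg m"
| "hear2 (Some a) (Some b) = HNoise"

lemma hear2_comm: "hear2 a b = hear2 b a"
  by (cases a; cases b) auto

lemma hear_path:
  assumes "j < n"
  shows "hear n (pE n) A S j = hear2 (if 0 < j then transmitting A (S (j-1)) else None)
                                      (if Suc j < n then transmitting A (S (Suc j)) else None)"
proof -
  define a where "a = (0 < j \<and> transmitting A (S (j-1)) \<noteq> None)"
  define b where "b = (Suc j < n \<and> transmitting A (S (Suc j)) \<noteq> None)"
  have T: "{u. u < n \<and> pE n j u \<and> transmitting A (S u) \<noteq> None}
      = (if a then {j-1} else {}) \<union> (if b then {Suc j} else {})"
    using assms unfolding a_def b_def pE_def by (auto split: if_splits)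
  have ne: "j - 1 \<noteq> Suc j" by simp
  show ?thesis
    unfolding hear_def Let_def T
    using ne a_def b_def by (cases a; cases b) (auto simp: card_insert_if)
qed

lemma step_cong:
  "S i = S j \<Longrightarrow> hear n E A S i = hear n E A S j \<Longrightarrow> t i = t j \<Longrightarrow>
    step n E t A r S i = step n E t A r S j"
  unfolding step_def by (simp only:)

lemma mirror:
  "\<forall>j < Suc (2*k). pre (Suc (2*k)) (pE (Suc (2*k))) (pt k) A r j
      = pre (Suc (2*k)) (pE (Suc (2*k))) (pt k) A r (2*k - j)"
proof (induction r)
  case 0 then show ?case by simp
next
  case (Suc r)
  show ?case
  proof (intro allI impI)
    fix j assume j: "j < Suc (2*k)"
    let ?S = "pre (Suc (2*k)) (pE (Suc (2*k))) (pt k) A r"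
    have h: "hear (Suc (2*k)) (pE (Suc (2*k))) A ?S j = hear (Suc (2*k)) (pE (Suc (2*k))) A ?S (2*k - j)"
    proof -
      have e1: "0 < j \<Longrightarrow> ?S (j - 1) = ?S (Suc (2*k - j))"
        using Suc.IH[rule_format, of "j-1"] j by (simp add: Suc_diff_le)
      have e2: "Suc j < Suc (2*k) \<Longrightarrow> ?S (Suc j) = ?S (2*k - j - 1)"
        using Suc.IH[rule_format, of "Suc j"] j by simp
      have c1: "(Suc (2*k - j) < Suc (2*k)) = (0 < j)" using j by auto
      have c2: "(0 < 2*k - j) = (Suc j < Suc (2*k))" using j by auto
      have c3: "2*k - j - 1 = 2*k - j - Suc 0" by simp
      show ?thesis using j
        apply (simp only: hear_path)
        apply (subst hear2_comm[of "if 0 < 2*k - j then _ else _"])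
        apply (simp only: c1 c2)
        using e1 e2 by (auto simp del: One_nat_def)
    qed
    show "pre (Suc (2*k)) (pE (Suc (2*k))) (pt k) A (Suc r) j
      = pre (Suc (2*k)) (pE (Suc (2*k))) (pt k) A (Suc r) (2*k - j)"
      using j apply simp
      apply (rule step_cong)
      using Suc.IH j apply blast
      using h apply blast
      using j by (auto simp: pt_def)
  qed
qed

lemma transl:
  "\<forall>i j. r \<le> i \<and> i + r \<le> 2*k \<and> r \<le> j \<and> j + r \<le> 2*k \<longrightarrow>
     pre (Suc (2*k)) (pE (Suc (2*k))) (pt k) A r i
      = pre (Suc (2*k)) (pE (Suc (2*k))) (pt k) A r j"
proof (induction r)
  case 0 then show ?case by simp
next
  case (Suc r)
  show ?case
  proof (intro allI impI)
    fix i j assume ij: "Suc r \<le> i \<and> i + Suc r \<le> 2*k \<and> Suc r \<le> j \<and> j + Suc r \<le> 2*k"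
    let ?S = "pre (Suc (2*k)) (pE (Suc (2*k))) (pt k) A r"
    have e0: "?S i = ?S j" using Suc.IH ij by simp
    have "r \<le> i-1 \<and> i-1+r \<le> 2*k \<and> r \<le> j-1 \<and> j-1+r \<le> 2*k" using ij by arith
    then have e1: "?S (i-1) = ?S (j-1)" using Suc.IH by blast
    have e2: "?S (Suc i) = ?S (Suc j)" using Suc.IH[rule_format, of "Suc i" "Suc j"] ij by simp
    have h: "hear (Suc (2*k)) (pE (Suc (2*k))) A ?S i = hear (Suc (2*k)) (pE (Suc (2*k))) A ?S j"
      using ij e1 e2 by (simp add: hear_path)
    show "pre (Suc (2*k)) (pE (Suc (2*k))) (pt k) A (Suc r) i
      = pre (Suc (2*k)) (pE (Suc (2*k))) (pt k) A (Suc r) j"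
      apply simp
      apply (rule step_cong)
      using e0 apply blast
      using h apply blast
      using ij by (auto simp: pt_def)
  qed
qed



lemma lower:
  assumes k: "1 \<le> k" and LE: "is_LE (Suc (2*k)) (pE (Suc (2*k))) (pt k) A d"
  shows "k \<le> election_time (Suc (2*k)) (pE (Suc (2*k))) (pt k) A"
proof (rule ccontr)
  let ?n = "Suc (2*k)"
  let ?T = "election_time ?n (pE ?n) (pt k) A"
  let ?f = "final_hist ?n (pE ?n) (pt k) A"
  assume "\<not> k \<le> ?T"
  then have T: "?T < k" by simp
  have mir: "?f j = ?f (2*k - j)" if "j < ?n" for j
    unfolding final_hist_def using mirror[of k A ?T, rule_format, OF that] by (simp only:)
  have "?T \<le> k \<and> k + ?T \<le> 2*k \<and> ?T \<le> Suc k \<and> Suc k + ?T \<le> 2*k" using T by arith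
  then have tr: "?f k = ?f (Suc k)"
    unfolding final_hist_def using transl[of ?T k A, rule_format, of k "Suc k"] by (simp only:)
  have "card {v. v < ?n \<and> d (?f v)} = 1" using LE unfolding is_LE_def by simp
  then obtain x where x: "{v. v < ?n \<and> d (?f v)} = {x}" by (meson card_1_singletonE)
  then have xn: "x < ?n" and dx: "d (?f x)" by auto
  show False
  proof (cases "x = k")
    case True
    then have "Suc k \<in> {v. v < ?n \<and> d (?f v)}" using dx tr k by simp
    then show False using x True by simp
  next
    case False
    then have "2*k - x \<in> {v. v < ?n \<and> d (?f v)}" using dx mir[OF xn] by simp
    then show False using x False by auto
  qed
qed



definition dd :: "nat \<Rightarrow> nat \<Rightarrow> nat" where "dd k j = min j (2*k - j)"

definition body :: "nat \<Rightarrow> nat \<Rightarrow> heard list" where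
  "body k j = [Spont, HTransmitted] @ replicate (dd k j - 1) HSilence
      @ [if dd k j = k then HNoise else HMsg 0]"

definition cf :: "nat \<Rightarrow> nat \<Rightarrow> nat \<Rightarrow> nstate" where
  "cf k r j = (if dd k j = 0 then
      (if r \<le> 1 then Asleep else if r = 2 then Active [WokeBy 0]
       else if r = 3 then Active [WokeBy 0, HTransmitted] else Done [WokeBy 0, HTransmitted])
    else if r = 0 then Asleep else if r = 1 then Active [Spont]
    else if r \<le> dd k j + 1 then Active ([Spont, HTransmitted] @ replicate (r - 2) HSilence)
    else if dd k j = k then (if r = k + 2 then Active (body k j) else Done (body k j))
    else if r = dd k j + 2 then Active (body k j)
    else if r = dd k j + 3 then Active (body k j @ [HTransmitted])
    else Done (body k j @ [HTransmitted]))"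

definition alg :: drip where
  "alg h = (if h = [Spont] then Transmit 0 else if (\<exists>m. h = [WokeBy m]) then Transmit 0
     else if h = [Spont, HTransmitted] then Listen
     else (case last h of HMsg m \<Rightarrow> Transmit 0 | HSilence \<Rightarrow> Listen | _ \<Rightarrow> Terminate))"

definition tr :: "nat \<Rightarrow> nat \<Rightarrow> nat \<Rightarrow> bool" where
  "tr k r j = ((r = 1 \<and> dd k j \<noteq> 0) \<or> (2 \<le> r \<and> dd k j + 2 = r \<and> dd k j < k))"

lemma dd_le: "dd k j \<le> k" by (simp add: dd_def)

lemma alg_rep: "alg (Spont # HTransmitted # replicate m HSilence) = Listen"
  by (cases m) (auto simp: alg_def)

lemma alg_body: "alg (body k j) = (if dd k j = k then Terminate else Transmit 0)"
  by (auto simp: alg_def body_def)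

lemma alg_body2: "alg (body k j @ [HTransmitted]) = Terminate"
  by (auto simp: alg_def body_def)

lemma alg_misc: "alg [Spont] = Transmit 0" "alg [WokeBy m] = Transmit 0"
   "alg [WokeBy m, HTransmitted] = Terminate"
  by (auto simp: alg_def)

lemma tm: "transmitting alg Asleep = None" "transmitting alg (Done h) = None"
  "transmitting alg (Active [Spont]) = Some 0"
  "transmitting alg (Active [WokeBy m]) = Some 0"
  "transmitting alg (Active [WokeBy m, HTransmitted]) = None"
  "transmitting alg (Active (Spont # HTransmitted # replicate q HSilence)) = None"
  "transmitting alg (Active (body k j)) = (if dd k j = k then None else Some 0)"
  "transmitting alg (Active (body k j @ [HTransmitted])) = None"
  by (simp_all add: transmitting_def alg_rep alg_body alg_body2 alg_misc)

lemma trans_cf: assumes k0: "0 < k" shows "transmitting alg (cf k r j) = (if tr k r j then Some 0 else None)"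
proof -
  have le: "dd k j \<le> k" by (rule dd_le)
  show ?thesis
  proof (cases "dd k j = 0")
    case True
    then show ?thesis using le k0 by (simp add: cf_def tm tr_def)
  next
    case False
    show ?thesis
    proof (cases "r \<le> dd k j + 1")
      case True
      then show ?thesis using False
        by (cases r) (auto simp add: cf_def tm tr_def)
    next
      case r: False
      show ?thesis
      proof (cases "dd k j = k")
        case True
        then show ?thesis using False r by (simp add: cf_def tm tr_def)
      next
        case nk: False
        then show ?thesis using False r le by (simp add: cf_def tm tr_def)
      qed
    qed
  qed
qed

lemma hear_cf:
  assumes k0: "0 < k" and j: "j < Suc (2*k)" and S: "\<forall>i < Suc (2*k). S i = cf k r i"
  shows "hear (Suc (2*k)) (pE (Suc (2*k))) alg S j =
     hear2 (if 0 < j \<and> tr k r (j-1) then Some 0 else None)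
           (if Suc j < Suc (2*k) \<and> tr k r (Suc j) then Some 0 else None)"
  using j S by (simp add: hear_path trans_cf[OF k0])

lemma H0: "\<not> tr k 0 i" by (simp add: tr_def)

lemma H1: assumes "0 < k" "j < Suc (2*k)" "dd k j = 0"
  shows "(0 < j \<and> tr k 1 (j-1)) \<noteq> (Suc j < Suc (2*k) \<and> tr k 1 (Suc j))"
  using assms unfolding tr_def dd_def min_def by (auto split: if_splits) (use assms(1) in linarith)

lemma H2: assumes "j < Suc (2*k)" "2 \<le> r" "r \<le> dd k j"
  shows "\<not> (0 < j \<and> tr k r (j-1)) \<and> \<not> (Suc j < Suc (2*k) \<and> tr k r (Suc j))"
  using assms unfolding tr_def dd_def min_def by (auto split: if_splits)

lemma H3a: assumes "j < Suc (2*k)" "0 < dd k j" "dd k j < k"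
  shows "(0 < j \<and> tr k (dd k j + 1) (j-1)) \<noteq> (Suc j < Suc (2*k) \<and> tr k (dd k j + 1) (Suc j))"
  using assms unfolding tr_def dd_def min_def by (auto split: if_splits)

lemma H3b: assumes "j < Suc (2*k)" "dd k j = k" "0 < k"
  shows "(0 < j \<and> tr k (k + 1) (j-1)) \<and> (Suc j < Suc (2*k) \<and> tr k (k + 1) (Suc j))"
  using assms unfolding tr_def dd_def min_def by (auto split: if_splits)

lemma hear2_one: "a \<noteq> b \<Longrightarrow> hear2 (if a then Some 0 else None) (if b then Some 0 else None) = HMsg 0"
  by (cases a; cases b) auto

lemma step_cf:
  assumes k0: "0 < k" and j: "j < Suc (2*k)" and S: "\<forall>i < Suc (2*k). S i = cf k r i"
  shows "step (Suc (2*k)) (pE (Suc (2*k))) (pt k) alg r S j = cf k (Suc r) j"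
proof -
  let ?n = "Suc (2*k)"
  let ?L = "0 < j \<and> tr k r (j-1)"
  let ?R = "Suc j < Suc (2*k) \<and> tr k r (Suc j)"
  have Sj: "S j = cf k r j" using S j by simp
  have hv: "hear ?n (pE ?n) alg S j = hear2 (if ?L then Some 0 else None) (if ?R then Some 0 else None)"
    by (rule hear_cf[OF k0 j S])
  have le: "dd k j \<le> k" by (rule dd_le)
  show ?thesis
  proof (cases "dd k j = 0")
    case d0: True
    then have t1: "pt k j = 1" using j unfolding dd_def pt_def by (auto simp: min_def split: if_splits)
    consider "r = 0" | "r = 1" | "r = 2" | "r = 3" | "r \<ge> 4" by arith
    then show ?thesis
    proof cases
      case 1
      then have "hear ?n (pE ?n) alg S j = HSilence" using hv H0 by simp
      then show ?thesis using 1 Sj d0 t1 by (simp add: step_def cf_def)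
    next
      case 2
      then have "hear ?n (pE ?n) alg S j = HMsg 0" using hv H1[OF k0 j d0] hear2_one by simp
      then show ?thesis using 2 Sj d0 t1 by (simp add: step_def cf_def)
    next
      case 3
      then show ?thesis using Sj d0 by (simp add: step_def cf_def alg_misc)
    next
      case 4
      then show ?thesis using Sj d0 by (simp add: step_def cf_def alg_misc)
    next
      case 5
      then show ?thesis using Sj d0 by (simp add: step_def cf_def alg_misc)
    qed
  next
    case dpos: False
    then have t0: "pt k j = 0" using j unfolding dd_def pt_def by (auto simp: min_def split: if_splits)
    consider "r = 0" | "r = 1" | "2 \<le> r \<and> r \<le> dd k j" | "r = dd k j + 1" | "r = dd k j + 2"
      | "r = dd k j + 3" | "r \<ge> dd k j + 4" by arith
    then show ?thesis
    proof cases
      case 1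
      then have "hear ?n (pE ?n) alg S j = HSilence" using hv H0 by simp
      then show ?thesis using 1 Sj dpos t0 by (simp add: step_def cf_def)
    next
      case 2
      then show ?thesis using Sj dpos by (simp add: step_def cf_def alg_misc)
    next
      case 3
      then have "hear ?n (pE ?n) alg S j = HSilence" using hv H2[OF j] by simp
      moreover have "Spont # HTransmitted # replicate (r - 2) HSilence @ [HSilence]
          = Spont # HTransmitted # replicate (Suc r - 2) HSilence"
      proof -
        obtain q where "r = Suc (Suc q)" using 3 by (metis add_2_eq_Suc le_Suc_ex)
        then show ?thesis by (simp add: replicate_append_same)
      qed
      ultimately show ?thesis using 3 Sj dpos by (simp add: step_def cf_def alg_rep)
    next
      case 4
      have hx: "hear ?n (pE ?n) alg S j = (if dd k j = k then HNoise else HMsg 0)"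
      proof (cases "dd k j = k")
        case True
        then show ?thesis using hv H3b[OF j True k0] 4 by simp
      next
        case False
        then have "dd k j < k" using le by simp
        then show ?thesis using hv H3a[OF j _ \<open>dd k j < k\<close>] dpos 4 hear2_one by simp
      qed
      have "Spont # HTransmitted # replicate (r - 2) HSilence @ [if dd k j = k then HNoise else HMsg 0]
          = body k j"
        using 4 by (simp add: body_def)
      then show ?thesis using 4 Sj dpos hx by (simp add: step_def cf_def alg_rep)
    next
      case 5
      then show ?thesis using Sj dpos le by (simp add: step_def cf_def alg_body)
    next
      case 6
      then show ?thesis using Sj dpos le by (simp add: step_def cf_def alg_body2)
    next
      case 7
      then show ?thesis using Sj dpos le by (simp add: step_def cf_def)
    qed
  qed
qed



lemma pre_cf: assumes k0: "0 < k"
  shows "\<forall>j < Suc (2*k). pre (Suc (2*k)) (pE (Suc (2*k))) (pt k) alg r j = cf k r j"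
proof (induction r)
  case 0 then show ?case by (simp add: cf_def)
next
  case (Suc r)
  then show ?case using step_cf[OF k0 _ Suc.IH] by simp
qed

definition fin :: "nat \<Rightarrow> nat \<Rightarrow> heard list" where
  "fin k j = (if dd k j = 0 then [WokeBy 0, HTransmitted] else if dd k j = k then body k j
     else body k j @ [HTransmitted])"

lemma cf_done: "cf k r j = Done h \<Longrightarrow> h = fin k j"
  unfolding cf_def fin_def by (auto split: if_splits)

lemma fin_noise: assumes "0 < k" "j < Suc (2*k)" shows "(HNoise \<in> set (fin k j)) = (j = k)"
proof -
  have "(dd k j = k) = (j = k)" using assms unfolding dd_def by (auto simp: min_def)
  then show ?thesis using assms unfolding fin_def body_def by auto
qed

lemma feas: assumes k0: "0 < k"
  shows "is_LE (Suc (2*k)) (pE (Suc (2*k))) (pt k) alg (\<lambda>h. HNoise \<in> set h)"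
proof -
  let ?n = "Suc (2*k)"
  have ad: "all_done ?n (pE ?n) (pt k) alg (k+3)"
    unfolding all_done_def
  proof (intro allI impI)
    fix v assume v: "v < ?n"
    have "dd k v \<le> k" by (rule dd_le)
    then have "\<exists>h. cf k (k+3) v = Done h" unfolding cf_def using k0 by auto
    then show "\<exists>h. pre ?n (pE ?n) (pt k) alg (k + 3) v = Done h" using pre_cf[OF k0] v by simp
  qed
  then have trm: "terminates ?n (pE ?n) (pt k) alg" unfolding terminates_def by blast
  let ?T = "election_time ?n (pE ?n) (pt k) alg"
  have adT: "all_done ?n (pE ?n) (pt k) alg ?T"
    unfolding election_time_def using ad by (rule LeastI)
  have fh: "final_hist ?n (pE ?n) (pt k) alg v = fin k v" if v: "v < ?n" for v
  proof -
    obtain h where h: "pre ?n (pE ?n) (pt k) alg ?T v = Done h" using adT v unfolding all_done_def by blast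
    then have "cf k ?T v = Done h" using pre_cf[OF k0] v by simp
    then have "h = fin k v" by (rule cf_done)
    then show ?thesis using h unfolding final_hist_def by simp
  qed
  have "{v. v < ?n \<and> HNoise \<in> set (final_hist ?n (pE ?n) (pt k) alg v)} = {k}"
    using fh fin_noise[OF k0] by auto
  then show ?thesis using trm unfolding is_LE_def by simp
qed

lemma valid: assumes k0: "0 < k" shows "valid_config (Suc (2*k)) (pE (Suc (2*k))) (pt k)"
proof -
  let ?n = "Suc (2*k)"
  let ?E = "pE ?n"
  have conn: "?E\<^sup>*\<^sup>* u v \<and> ?E\<^sup>*\<^sup>* v u" if "u \<le> v" "v < ?n" for u v
    using that
  proof (induction v)
    case 0 then show ?case by simp
  next
    case (Suc v)
    show ?case
    proof (cases "u = Suc v")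
      case True then show ?thesis by simp
    next
      case False
      then have IH: "?E\<^sup>*\<^sup>* u v \<and> ?E\<^sup>*\<^sup>* v u" using Suc by simp
      have e1: "?E v (Suc v)" and e2: "?E (Suc v) v" using Suc.prems unfolding pE_def by auto
      show ?thesis using IH e1 e2
        by (meson converse_rtranclp_into_rtranclp rtranclp.rtrancl_into_rtrancl)
    qed
  qed
  have "\<forall>u<?n. \<forall>v<?n. ?E\<^sup>*\<^sup>* u v"
  proof (intro allI impI)
    fix u v assume "u < ?n" "v < ?n"
    then show "?E\<^sup>*\<^sup>* u v" using conn[of u v] conn[of v u] by (cases "u \<le> v") auto
  qed
  moreover have "pt k 1 = 0" using k0 unfolding pt_def by simp
  moreover have "1 < ?n" using k0 by simp
  moreover have "\<forall>u v. ?E u v \<longrightarrow> u < ?n \<and> v < ?n" unfolding pE_def by simp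
  moreover have "\<forall>u v. ?E u v \<longrightarrow> ?E v u" unfolding pE_def by auto
  moreover have "\<forall>v. \<not> ?E v v" unfolding pE_def by simp
  moreover have "\<forall>v. ?n \<le> v \<longrightarrow> pt k v = 0" unfolding pt_def by simp
  ultimately show ?thesis unfolding valid_config_def
    apply (intro conjI)
    apply simp
    apply blast+
    done
qed

lemma span1: assumes k0: "0 < k" shows "span (Suc (2*k)) (pt k) = 1"
proof -
  have "pt k ` {..<Suc (2*k)} = {0, 1}"
  proof
    show "pt k ` {..<Suc (2*k)} \<subseteq> {0, 1}" unfolding pt_def by auto
    have "pt k 0 = 1" "pt k 1 = 0" using k0 unfolding pt_def by auto
    moreover have "0 \<in> {..<Suc (2*k)}" "1 \<in> {..<Suc (2*k)}" using k0 by auto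
    ultimately show "{0, 1} \<subseteq> pt k ` {..<Suc (2*k)}" by (metis empty_subsetI image_eqI insert_subset)
  qed
  then show ?thesis unfolding span_def by simp
qed

theorem proposition2:
  shows "\<exists>C :: (nat \<times> (nat \<Rightarrow> nat \<Rightarrow> bool) \<times> (nat \<Rightarrow> nat)) set.
    infinite C
    \<and> (\<forall>(n, E, t) \<in> C. valid_config n E t \<and> span n t = 1 \<and> feasible n E t)
    \<and> (\<exists>c :: real. c > 0 \<and>
         (\<forall>(n, E, t) \<in> C. \<forall>A d. is_LE n E t A d \<longrightarrow>
             c * real n \<le> real (election_time n E t A)))"
proof -
  define f where "f = (\<lambda>k::nat. (Suc (2*k), pE (Suc (2*k)), pt k))"
  define C where "C = f ` {1..}"
  have inj: "inj f" unfolding f_def inj_def by auto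
  have "infinite C" unfolding C_def using inj
    by (metis infinite_Ici finite_imageD injD inj_onI)
  moreover have "\<forall>(n, E, t) \<in> C. valid_config n E t \<and> span n t = 1 \<and> feasible n E t"
  proof (unfold C_def, rule ballI)
    fix x assume "x \<in> f ` {1..}"
    then obtain k where k: "1 \<le> k" and x: "x = f k" by auto
    then have k0: "0 < k" by simp
    have "valid_config (Suc (2*k)) (pE (Suc (2*k))) (pt k) \<and> span (Suc (2*k)) (pt k) = 1
       \<and> feasible (Suc (2*k)) (pE (Suc (2*k))) (pt k)"
      using valid[OF k0] span1[OF k0] feas[OF k0] unfolding feasible_def by blast
    then show "case x of (n, E, t) \<Rightarrow> valid_config n E t \<and> span n t = 1 \<and> feasible n E t"
      using x unfolding f_def by simp
  qed
  moreover have low: "\<forall>(n, E, t) \<in> C. \<forall>A d. is_LE n E t A d \<longrightarrow>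
             (1/3) * real n \<le> real (election_time n E t A)"
  proof (unfold C_def, rule ballI)
    fix x assume "x \<in> f ` {1..}"
    then obtain k where k: "1 \<le> k" and x: "x = f k" by auto
    have "is_LE (Suc (2*k)) (pE (Suc (2*k))) (pt k) A d \<longrightarrow> (1/3) * real (Suc (2*k)) \<le> real (election_time (Suc (2*k)) (pE (Suc (2*k))) (pt k) A)" for A d
    proof
      assume LE: "is_LE (Suc (2*k)) (pE (Suc (2*k))) (pt k) A d"
    have "k \<le> election_time (Suc (2*k)) (pE (Suc (2*k))) (pt k) A" by (rule lower[OF k LE])
    then have "real k \<le> real (election_time (Suc (2*k)) (pE (Suc (2*k))) (pt k) A)" by simp
    moreover have "(1/3) * real (Suc (2*k)) \<le> real k" using k by simp
    ultimately show "(1/3) * real (Suc (2*k)) \<le> real (election_time (Suc (2*k)) (pE (Suc (2*k))) (pt k) A)"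
      by linarith
    qed
    then show "case x of (n, E, t) \<Rightarrow> \<forall>A d. is_LE n E t A d \<longrightarrow> (1/3) * real n \<le> real (election_time n E t A)"
      using x unfolding f_def by (simp only: prod.case) blast
  qed
  moreover have "\<exists>c::real. c > 0 \<and> (\<forall>(n, E, t) \<in> C. \<forall>A d. is_LE n E t A d \<longrightarrow>
             c * real n \<le> real (election_time n E t A))"
    apply (rule exI[of _ "1/3"])
    apply (rule conjI)
     apply simp
    by (rule low)
  ultimately show ?thesis by blast
qed

end
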